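(* Let $\mathscr{C}$ be a constant composition $(n,M,\mathcal{X},\epsilon,B,\delta)$-code for the complex AWGN channel with noise variance $\sigma^2$ belonging to the family $\mathsf{C}(C,\boldsymbol{A},\boldsymbol{L},\boldsymbol{\alpha},\boldsymbol{p},\boldsymbol{r})$ described below. Then \[ \epsilon\ge 1-\prod_{c=1}^C\left(1-\exp\!\left(-\frac{r_c^2}{\sigma^2}\right)\right)^{np_c}. \]
   Context: Channel: $f_{\boldsymbol{Y}|\boldsymbol{X}}(\boldsymbol{y}|\boldsymbol{\nu})=\prod_{m=1}^n \frac{1}{\pi\sigma^2}\exp(-|y_m-\nu_m|^2/\sigma^2)$. An $(n,M,\mathcal{X})$-code is $\{(\boldsymbol{u}(i),\mathcal{D}_i)\}_{i=1}^M$ with $\boldsymbol{u}(i)\in\mathcal{X}^n$ and pairwise disjoint $\mathcal{D}_i\subseteq\mathbb{C}^n$; $\gamma(\mathscr{C})=\frac1M\sum_i\big(1-\int_{\mathcal{D}_i}f_{\boldsymbol{Y}|\boldsymbol{X}}(\boldsymbol{y}|\boldsymbol{u}(i))\mathrm{d}\boldsymbol{y}\big)$; $e_i=k_1\sum_m|u_m(i)|^2+k_2\sum_m|u_m(i)|^4$ with positive constants $k_1,k_2$; $\theta(\mathscr{C},B)=\frac1M\sum_i\mathbb{1}_{\{e_i<B\}}$; an $(n,M,\mathcal{X},\epsilon,B,\delta)$-code is one with $\gamma(\mathscr{C})\le\epsilon$, $\theta(\mathscr{C},B)\le\delta$. Types: $P_{\boldsymbol{u}(i)}(x)=\frac1n\sum_m\mathbb{1}_{\{u_m(i)=x\}}$,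 $P_{\mathscr{C}}=\frac1M\sum_iP_{\boldsymbol{u}(i)}$; constant composition means $P_{\boldsymbol{u}(i)}=P_{\mathscr{C}}$ for all $i$. Family $\mathsf{C}(C,\boldsymbol{A},\boldsymbol{L},\boldsymbol{\alpha},\boldsymbol{p},\boldsymbol{r})$: amplitudes $A_1>\dots>A_C>0$; $L_c\in\mathbb{N}$; phases $\alpha_c$; layer $c$ is $\{x_c^{(1)},\dots,x_c^{(L_c)}\}=\{A_c\exp(\mathrm{i}(2\pi\ell/L_c+\alpha_c)):\ell=0,\dots,L_c-1\}$; $\mathcal{X}$ is the union of the layers. Codewords are pairwise distinct with $P_{\mathscr{C}}(x_c^{(\ell)})=p_c/L_c$ for a probability vector $\boldsymbol{p}=(p_1,\dots,p_C)$. With radii $r_c>0$ and discs $\mathcal{G}_c^{(\ell)}=\{y:|y-x_c^{(\ell)}|\le r_c\}$, $\mathcal{D}_i=\prod_m\mathcal{D}_{i,m}$ with $\mathcal{D}_{i,m}=\mathcal{G}_c^{(\ell)}$ if $u_m(i)=x_c^{(\ell)}$; and $A_c-A_{c+1}\ge r_c+r_{c+1}$ for $c<C$. *)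

theory Defs
  imports "HOL-Analysis.Analysis"
begin

text \<open>Block length n is CARD('n); received/transmitted blocks live in complex^'n.
  Codewords and decoding regions are indexed by i in {1..M}.\<close>

definition awgn_density :: "real \<Rightarrow> complex^'n \<Rightarrow> complex^'n \<Rightarrow> real" where
  "awgn_density \<sigma> \<nu> y =
     (\<Prod>m\<in>UNIV. 1 / (pi * \<sigma>\<^sup>2) * exp (- (cmod (y$m - \<nu>$m))\<^sup>2 / \<sigma>\<^sup>2))"

definition avg_error ::
  "real \<Rightarrow> nat \<Rightarrow> (nat \<Rightarrow> complex^'n) \<Rightarrow> (nat \<Rightarrow> (complex^'n) set) \<Rightarrow> real" where
  "avg_error \<sigma> M u D =
     (1 / real M) * (\<Sum>i=1..M. 1 - (LINT y:D i|lborel. awgn_density \<sigma> (u i) y))"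

definition energy :: "real \<Rightarrow> real \<Rightarrow> complex^'n \<Rightarrow> real" where
  "energy k1 k2 v = k1 * (\<Sum>m\<in>UNIV. (cmod (v$m))^2) + k2 * (\<Sum>m\<in>UNIV. (cmod (v$m))^4)"

definition theta :: "real \<Rightarrow> real \<Rightarrow> real \<Rightarrow> nat \<Rightarrow> (nat \<Rightarrow> complex^'n) \<Rightarrow> real" where
  "theta k1 k2 B M u = (1 / real M) * real (card {i\<in>{1..M}. energy k1 k2 (u i) < B})"

definition is_code :: "nat \<Rightarrow> complex set \<Rightarrow> (nat \<Rightarrow> complex^'n) \<Rightarrow> (nat \<Rightarrow> (complex^'n) set) \<Rightarrow> bool" where
  "is_code M X u D \<longleftrightarrow>
     (\<forall>i\<in>{1..M}. \<forall>m. u i $ m \<in> X) \<and>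
     (\<forall>i\<in>{1..M}. \<forall>j\<in>{1..M}. i \<noteq> j \<longrightarrow> D i \<inter> D j = {})"

definition type_of_word :: "complex^'n \<Rightarrow> complex \<Rightarrow> real" where
  "type_of_word v x = (1 / real CARD('n)) * real (card {m. v$m = x})"

definition code_type :: "nat \<Rightarrow> (nat \<Rightarrow> complex^'n) \<Rightarrow> complex \<Rightarrow> real" where
  "code_type M u x = (1 / real M) * (\<Sum>i=1..M. type_of_word (u i) x)"

definition constant_composition :: "nat \<Rightarrow> (nat \<Rightarrow> complex^'n) \<Rightarrow> bool" where
  "constant_composition M u \<longleftrightarrow> (\<forall>i\<in>{1..M}. \<forall>x. type_of_word (u i) x = code_type M u x)"

text \<open>Constellation point x_c^(l+1) = A_c exp(i(2 pi l / L_c + alpha_c)), l = 0..L_c-1.\<close>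
definition cpoint :: "(nat \<Rightarrow> real) \<Rightarrow> (nat \<Rightarrow> nat) \<Rightarrow> (nat \<Rightarrow> real) \<Rightarrow> nat \<Rightarrow> nat \<Rightarrow> complex" where
  "cpoint A L \<alpha> c l = complex_of_real (A c) * exp (\<i> * complex_of_real (2 * pi * real l / real (L c) + \<alpha> c))"

definition constellation :: "nat \<Rightarrow> (nat \<Rightarrow> real) \<Rightarrow> (nat \<Rightarrow> nat) \<Rightarrow> (nat \<Rightarrow> real) \<Rightarrow> complex set" where
  "constellation C A L \<alpha> = (\<Union>c\<in>{1..C}. {cpoint A L \<alpha> c l | l. l < L c})"

definition disc_region ::
  "nat \<Rightarrow> (nat \<Rightarrow> real) \<Rightarrow> (nat \<Rightarrow> nat) \<Rightarrow> (nat \<Rightarrow> real) \<Rightarrow> (nat \<Rightarrow> real) \<Rightarrow> complex^'n \<Rightarrow> (complex^'n) set" where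
  "disc_region C A L \<alpha> r v =
     {y. \<forall>m. \<exists>c\<in>{1..C}. \<exists>l<L c. v$m = cpoint A L \<alpha> c l \<and> cmod (y$m - v$m) \<le> r c}"

definition in_family ::
  "nat \<Rightarrow> (nat \<Rightarrow> real) \<Rightarrow> (nat \<Rightarrow> nat) \<Rightarrow> (nat \<Rightarrow> real) \<Rightarrow> (nat \<Rightarrow> real) \<Rightarrow> (nat \<Rightarrow> real)
   \<Rightarrow> nat \<Rightarrow> (nat \<Rightarrow> complex^'n) \<Rightarrow> (nat \<Rightarrow> (complex^'n) set) \<Rightarrow> bool" where
  "in_family C A L \<alpha> p r M u D \<longleftrightarrow>
     C \<ge> 1 \<and>
     (\<forall>c\<in>{1..<C}. A c > A (Suc c)) \<and> A C > 0 \<and>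
     (\<forall>c\<in>{1..C}. L c \<ge> 1) \<and>
     (\<forall>c\<in>{1..C}. p c \<ge> 0) \<and> (\<Sum>c=1..C. p c) = 1 \<and>
     (\<forall>c\<in>{1..C}. r c > 0) \<and>
     (\<forall>c\<in>{1..<C}. A c - A (Suc c) \<ge> r c + r (Suc c)) \<and>
     (\<forall>i\<in>{1..M}. \<forall>j\<in>{1..M}. i \<noteq> j \<longrightarrow> u i \<noteq> u j) \<and>
     (\<forall>c\<in>{1..C}. \<forall>l<L c. code_type M u (cpoint A L \<alpha> c l) = p c / real (L c)) \<and>
     (\<forall>i\<in>{1..M}. D i = disc_region C A L \<alpha> r (u i))"

end

theory Submission
  imports Defs
begin


lemma prod_Basis_vec:
  "(\<Prod>b\<in>(Basis::('a::euclidean_space^'n) set). f b) = (\<Prod>i\<in>UNIV. \<Prod>b\<in>Basis. f (axis i b))"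
  unfolding Basis_vec_def
  apply (subst prod.UNION_disjoint)
     apply (auto simp: axis_eq_axis)
  apply (subst prod.UNION_disjoint)
     apply (auto simp: axis_eq_axis)
  done

lemma mem_box_vec:
  fixes l u x :: "'a::euclidean_space^'n"
  shows "x \<in> box l u \<longleftrightarrow> (\<forall>i. x$i \<in> box (l$i) (u$i))"
  by (auto simp: mem_box Basis_vec_def inner_axis)

lemma vec_lambda_measurable:
  "vec_lambda \<in> borel_measurable (PiM UNIV (\<lambda>_::'n::finite. (lborel :: 'a::euclidean_space measure)))"
proof (subst borel_measurable_euclidean_space, intro ballI)
  fix j :: "'a^'n" assume "j \<in> Basis"
  then obtain i b where j: "j = axis i b" "b \<in> Basis" by (auto simp: Basis_vec_def)
  have "(\<lambda>x. vec_lambda x \<bullet> j) = (\<lambda>x. x i \<bullet> b)" by (simp add: j inner_axis)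
  then show "(\<lambda>x. vec_lambda x \<bullet> j) \<in> borel_measurable (PiM UNIV (\<lambda>_. lborel))" by simp
qed

lemma lborel_vec:
  "(lborel :: ('a::euclidean_space ^ 'n::finite) measure) = distr (PiM UNIV (\<lambda>_. lborel)) borel vec_lambda"
proof (rule lborel_eqI)
  interpret P: product_sigma_finite "\<lambda>_::'n. (lborel :: 'a measure)"
    by (simp add: product_sigma_finite_def sigma_finite_lborel)
  fix l u :: "'a^'n" assume le: "\<And>b. b \<in> Basis \<Longrightarrow> l\<bullet>b \<le> u\<bullet>b"
  have le': "l$i \<bullet> b \<le> u$i \<bullet> b" if "b \<in> Basis" for i b
    using le[of "axis i b"] that by (auto simp: Basis_vec_def inner_axis)
  have pre: "vec_lambda -` box l u \<inter> space (PiM UNIV (\<lambda>_. lborel)) = PiE UNIV (\<lambda>i. box (l$i) (u$i))"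
    by (auto simp: mem_box_vec space_PiM PiE_def Pi_def extensional_def)
  have "emeasure (distr (PiM UNIV (\<lambda>_. lborel)) borel vec_lambda) (box l u)
      = emeasure (PiM UNIV (\<lambda>_. lborel)) (PiE UNIV (\<lambda>i. box (l$i) (u$i)))"
    by (subst emeasure_distr[OF vec_lambda_measurable]) (auto simp: pre)
  also have "\<dots> = (\<Prod>i\<in>UNIV. emeasure lborel (box (l$i) (u$i)))"
    by (rule P.emeasure_PiM) auto
  also have "\<dots> = (\<Prod>i\<in>UNIV. ennreal (\<Prod>b\<in>Basis. (u$i - l$i) \<bullet> b))"
    using le' by (intro prod.cong refl emeasure_lborel_box) auto
  also have "\<dots> = ennreal (\<Prod>i\<in>UNIV. \<Prod>b\<in>Basis. (u$i - l$i) \<bullet> b)"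
    using le' by (intro prod_ennreal prod_nonneg) (auto simp: inner_diff_left)
  also have "(\<Prod>i\<in>UNIV. \<Prod>b\<in>Basis. (u$i - l$i) \<bullet> b) = (\<Prod>b\<in>Basis. (u - l) \<bullet> b)"
    by (simp add: prod_Basis_vec inner_axis)
  finally show "emeasure (distr (PiM UNIV (\<lambda>_. lborel)) borel vec_lambda) (box l u) = (\<Prod>b\<in>Basis. (u - l) \<bullet> b)" .
qed simp

lemma vec_nth_borel[measurable]: "(\<lambda>y::'a::euclidean_space^'n. y$m) \<in> borel_measurable borel"
  by (intro borel_measurable_continuous_onI continuous_intros)

lemma nn_integral_lborel_vec_prod:
  fixes g :: "'n::finite \<Rightarrow> 'a::euclidean_space \<Rightarrow> ennreal"
  assumes "\<And>m. g m \<in> borel_measurable borel"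
  shows "(\<integral>\<^sup>+y. (\<Prod>m\<in>UNIV. g m (y$m)) \<partial>lborel) = (\<Prod>m\<in>UNIV. \<integral>\<^sup>+z. g m z \<partial>lborel)"
proof -
  interpret P: product_sigma_finite "\<lambda>_::'n. (lborel :: 'a measure)"
    by (simp add: product_sigma_finite_def sigma_finite_lborel)
  have [measurable]: "(\<lambda>y. (\<Prod>m\<in>UNIV. g m (y$m))) \<in> borel_measurable borel"
    by (intro borel_measurable_prod_ennreal measurable_compose[OF vec_nth_borel assms])
  have "(\<integral>\<^sup>+y. (\<Prod>m\<in>UNIV. g m (y$m)) \<partial>lborel) = (\<integral>\<^sup>+y. (\<Prod>m\<in>UNIV. g m (y$m)) \<partial>distr (PiM UNIV (\<lambda>_. lborel)) borel vec_lambda)"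
    by (subst lborel_vec) simp
  also have "\<dots> = (\<integral>\<^sup>+x. (\<Prod>m\<in>UNIV. g m (x m)) \<partial>PiM UNIV (\<lambda>_. lborel))"
    using assms by (subst nn_integral_distr[OF vec_lambda_measurable]) auto
  also have "\<dots> = (\<Prod>m\<in>UNIV. \<integral>\<^sup>+z. g m z \<partial>lborel)"
    using assms by (subst P.product_nn_integral_prod) auto
  finally show ?thesis .
qed


lemma disc_gauss:
  fixes v :: complex and \<rho> s :: real
  assumes \<rho>0: "\<rho> \<ge> 0" and s0: "s > 0"
  shows "(\<integral>\<^sup>+z. ennreal (indicator (cball v \<rho>) z * (1 / (pi * s) * exp (-(cmod(z-v))\<^sup>2/s))) \<partial>lborel)
         = ennreal (1 - exp(-\<rho>\<^sup>2/s))"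
proof -
  define a where "a = \<rho>\<^sup>2"
  define c where "c = 1 / (pi * s)"
  define f where "f t = (1/s) * exp(-t/s)" for t
  define S where "S = {p::complex\<times>real. cmod(fst p - v) \<le> \<rho> \<and> (cmod(fst p - v))\<^sup>2 \<le> snd p \<and> snd p \<le> a}"
  have a0: "a \<ge> 0" by (simp add: a_def)
  have c0: "c > 0" using s0 by (simp add: c_def)
  have f0: "f t \<ge> 0" for t using s0 by (simp add: f_def)
  have fm[measurable]: "f \<in> borel_measurable borel" unfolding f_def by measurable
  have "closed S" unfolding S_def
    by (intro closed_Collect_conj closed_Collect_le continuous_intros)
  then have S_borel[measurable]: "S \<in> sets borel" by (rule borel_closed)
  have Hm: "(\<lambda>p. ennreal (f (snd p)) * indicator S p) \<in> borel_measurable (lborel \<Otimes>\<^sub>M lborel)"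
  proof -
    have sndm[measurable]: "snd \<in> borel_measurable (borel :: (complex\<times>real) measure)"
      by (intro borel_measurable_continuous_onI continuous_intros)
    show ?thesis by (subst lborel_prod) measurable
  qed
  have dF: "DERIV (\<lambda>t. - exp(-t/s)) x :> f x" for x
    unfolding f_def using s0 by (auto intro!: derivative_eq_intros simp: field_simps)
  have rep: "ennreal (exp(-(cmod(z-v))\<^sup>2/s)) = ennreal (exp(-a/s)) + (\<integral>\<^sup>+t. ennreal (f t) * indicator S (z,t) \<partial>lborel)"
    if "z \<in> cball v \<rho>" for z
  proof -
    have w: "(cmod(z-v))\<^sup>2 \<le> a" using that \<rho>0 unfolding a_def
      by (simp add: dist_norm norm_minus_commute power_mono)
    have "(\<integral>\<^sup>+t. ennreal (f t) * indicator S (z,t) \<partial>lborel) = (\<integral>\<^sup>+t. ennreal (f t) * indicator {(cmod(z-v))\<^sup>2..a} t \<partial>lborel)"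
      using that by (intro nn_integral_cong) (auto simp: S_def indicator_def dist_norm norm_minus_commute)
    also have "\<dots> = ennreal (- exp(-a/s) - - exp(-(cmod(z-v))\<^sup>2/s))"
      using w f0 dF by (subst nn_integral_FTC_Icc) auto
    finally have I: "(\<integral>\<^sup>+t. ennreal (f t) * indicator S (z,t) \<partial>lborel) = ennreal (exp(-(cmod(z-v))\<^sup>2/s) - exp(-a/s))"
      by simp
    have le: "exp(-a/s) \<le> exp(-(cmod(z-v))\<^sup>2/s)" using w s0 by (simp add: divide_right_mono)
    have "ennreal (exp(-a/s)) + ennreal (exp(-(cmod(z-v))\<^sup>2/s) - exp(-a/s))
        = ennreal (exp(-a/s) + (exp(-(cmod(z-v))\<^sup>2/s) - exp(-a/s)))"
      using le by (intro ennreal_plus[symmetric]) auto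
    then show ?thesis using I by simp
  qed
  have pt: "ennreal (indicator (cball v \<rho>) z * (1 / (pi * s) * exp (-(cmod(z-v))\<^sup>2/s)))
      = ennreal (c * exp(-a/s)) * indicator (cball v \<rho>) z + ennreal c * (\<integral>\<^sup>+t. ennreal (f t) * indicator S (z,t) \<partial>lborel)" for z
  proof (cases "z \<in> cball v \<rho>")
    case True
    have "indicator (cball v \<rho>) z * (1 / (pi * s) * exp (-(cmod(z-v))\<^sup>2/s)) = c * exp (-(cmod(z-v))\<^sup>2/s)"
      using True by (simp add: c_def)
    then have "ennreal (indicator (cball v \<rho>) z * (1 / (pi * s) * exp (-(cmod(z-v))\<^sup>2/s)))
       = ennreal c * ennreal (exp (-(cmod(z-v))\<^sup>2/s))"
      using c0 by (simp add: ennreal_mult)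
    also have "\<dots> = ennreal c * ennreal (exp(-a/s)) + ennreal c * (\<integral>\<^sup>+t. ennreal (f t) * indicator S (z,t) \<partial>lborel)"
      by (subst rep[OF True]) (rule distrib_left)
    also have "ennreal c * ennreal (exp(-a/s)) = ennreal (c * exp(-a/s)) * indicator (cball v \<rho>) z"
      using True c0 by (simp add: ennreal_mult)
    finally show ?thesis .
  next
    case False
    then have "(\<lambda>t. ennreal (f t) * indicator S (z,t)) = (\<lambda>t. 0)"
      by (auto simp: S_def fun_eq_iff dist_norm norm_minus_commute)
    then show ?thesis using False by simp
  qed
  have sec: "(\<integral>\<^sup>+z. ennreal (f t) * indicator S (z,t) \<partial>lborel) = ennreal (f t * pi * t) * indicator {0..a} t" for t
  proof (cases "0 \<le> t \<and> t \<le> a")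
    case True
    have key: "(y\<^sup>2 \<le> t) = (y \<le> sqrt t)" if "0 \<le> y" for y :: real
      using that by (metis abs_of_nonneg real_sqrt_abs real_sqrt_le_iff)
    have sq: "sqrt t \<le> \<rho>" using True \<rho>0 unfolding a_def
      by (metis abs_of_nonneg real_sqrt_abs real_sqrt_le_iff)
    have sect: "{z. (z,t) \<in> S} = cball v (sqrt t)"
      using True sq unfolding S_def
      by (auto simp: dist_norm norm_minus_commute key)
    have "(\<integral>\<^sup>+z. ennreal (f t) * indicator S (z,t) \<partial>lborel) = (\<integral>\<^sup>+z. ennreal (f t) * indicator (cball v (sqrt t)) z \<partial>lborel)"
      using sect by (intro nn_integral_cong) (auto simp: indicator_def)
    also have "\<dots> = ennreal (f t) * emeasure lborel (cball v (sqrt t))"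
      by (rule nn_integral_cmult_indicator) simp
    also have "emeasure lborel (cball v (sqrt t)) = ennreal (pi * t)"
      using True by (subst emeasure_cball) (auto simp: unit_ball_vol_2)
    finally have "(\<integral>\<^sup>+z. ennreal (f t) * indicator S (z,t) \<partial>lborel) = ennreal (f t) * ennreal (pi * t)" .
    then show ?thesis using True f0 by (simp add: ennreal_mult' mult.assoc)
  next
    case False
    have "(z,t) \<notin> S" for z
    proof
      assume "(z,t) \<in> S"
      then have "(cmod(z-v))\<^sup>2 \<le> t" "t \<le> a" by (auto simp: S_def)
      with False show False using zero_le_power2[of "cmod(z-v)"] by linarith
    qed
    then have "(\<lambda>z. ennreal (f t) * indicator S (z,t)) = (\<lambda>z. 0)"
      by (auto simp: fun_eq_iff)
    then show ?thesis using False by simp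
  qed
  have Hm': "(\<lambda>(z,t). ennreal (f t) * indicator S (z,t)) \<in> borel_measurable (lborel \<Otimes>\<^sub>M lborel)"
    using Hm by (simp add: case_prod_unfold)
  have Jm: "(\<lambda>z. \<integral>\<^sup>+t. ennreal (f t) * indicator S (z,t) \<partial>lborel) \<in> borel_measurable (lborel :: complex measure)"
    using lborel.borel_measurable_nn_integral_fst[OF Hm] by simp
  define G where "G t = - pi * (t + s) * exp(-t/s)" for t
  have dG: "DERIV G x :> f x * pi * x" for x
    unfolding G_def f_def using s0 by (auto intro!: derivative_eq_intros simp: field_simps)
  have fpm: "(\<lambda>t. f t * pi * t) \<in> borel_measurable borel" by measurable
  have X: "(\<integral>\<^sup>+t. ennreal (f t * pi * t) * indicator {0..a} t \<partial>lborel) = ennreal (G a - G 0)"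
    using a0 f0 dG by (subst nn_integral_FTC_Icc[OF fpm]) auto
  have X0: "G a - G 0 \<ge> 0"
  proof -
    have "1 + a/s \<le> exp (a/s)" by (rule exp_ge_add_one_self)
    then have "(1 + a/s) * exp(-a/s) \<le> 1" by (simp add: exp_minus field_simps)
    then have "(a + s) * exp(-a/s) \<le> s" using s0 by (simp add: field_simps)
    then have "pi * ((a + s) * exp(-a/s)) \<le> pi * s" by (rule mult_left_mono) simp
    then show ?thesis unfolding G_def by (simp add: algebra_simps)
  qed
  have "(\<integral>\<^sup>+z. ennreal (indicator (cball v \<rho>) z * (1 / (pi * s) * exp (-(cmod(z-v))\<^sup>2/s))) \<partial>lborel)
      = (\<integral>\<^sup>+z. ennreal (c * exp(-a/s)) * indicator (cball v \<rho>) z + ennreal c * (\<integral>\<^sup>+t. ennreal (f t) * indicator S (z,t) \<partial>lborel) \<partial>lborel)"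
    by (simp only: pt)
  also have "\<dots> = ennreal (c * exp(-a/s)) * emeasure lborel (cball v \<rho>) + ennreal c * (\<integral>\<^sup>+z. \<integral>\<^sup>+t. ennreal (f t) * indicator S (z,t) \<partial>lborel \<partial>lborel)"
    using Jm by (subst nn_integral_add) (auto simp: nn_integral_cmult nn_integral_cmult_indicator intro!: borel_measurable_times_ennreal borel_measurable_indicator)
  also have "(\<integral>\<^sup>+z. \<integral>\<^sup>+t. ennreal (f t) * indicator S (z,t) \<partial>lborel \<partial>lborel)
      = (\<integral>\<^sup>+t. \<integral>\<^sup>+z. ennreal (f t) * indicator S (z,t) \<partial>lborel \<partial>lborel)"
    using lborel_pair.Fubini'[OF Hm'] by simp
  also have "\<dots> = (\<integral>\<^sup>+t. ennreal (f t * pi * t) * indicator {0..a} t \<partial>lborel)"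
    by (simp only: sec)
  also have "\<dots> = ennreal (G a - G 0)" by (rule X)
  also have "emeasure lborel (cball v \<rho>) = ennreal (pi * a)"
    using \<rho>0 by (subst emeasure_cball) (auto simp: unit_ball_vol_2 a_def)
  finally have "(\<integral>\<^sup>+z. ennreal (indicator (cball v \<rho>) z * (1 / (pi * s) * exp (-(cmod(z-v))\<^sup>2/s))) \<partial>lborel)
      = ennreal (c * exp(-a/s) * (pi * a) + c * (G a - G 0))"
    using c0 a0 X0 by (simp add: ennreal_mult ennreal_plus)
  also have "c * exp(-a/s) * (pi * a) + c * (G a - G 0) = 1 - exp(-\<rho>\<^sup>2/s)"
    unfolding c_def G_def a_def using s0 by (simp add: field_simps)
  finally show ?thesis .
qed

lemma A_strict:
  assumes "\<forall>c\<in>{1..<C}. A c > A (Suc c)"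
  shows "1 \<le> c \<Longrightarrow> c + Suc k \<le> C \<Longrightarrow> (A (c + Suc k) :: real) < A c"
proof (induction k)
  case 0 then show ?case using assms by auto
next
  case (Suc k)
  then have "A (c + Suc k) < A c" by simp
  moreover have "A (Suc (c + Suc k)) < A (c + Suc k)" using assms Suc.prems by auto
  ultimately show ?case by simp
qed

lemma cmod_cpoint: "A c \<ge> 0 \<Longrightarrow> cmod (cpoint A L \<alpha> c l) = A c"
  unfolding cpoint_def by (simp add: norm_mult)

lemma cpoint_inj:
  assumes "A c \<noteq> 0" "l < L c" "l' < L c" "cpoint A L \<alpha> c l = cpoint A L \<alpha> c l'"
  shows "l = l'"
proof -
  have "exp (\<i> * complex_of_real (2 * pi * real l / real (L c) + \<alpha> c)) = exp (\<i> * complex_of_real (2 * pi * real l' / real (L c) + \<alpha> c))"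
    using assms(1,4) unfolding cpoint_def by simp
  then obtain k :: int where k: "\<i> * complex_of_real (2 * pi * real l / real (L c) + \<alpha> c) = \<i> * complex_of_real (2 * pi * real l' / real (L c) + \<alpha> c) + (of_int (2 * k) * pi) * \<i>"
    unfolding exp_eq by blast
  then have "Im (\<i> * complex_of_real (2 * pi * real l / real (L c) + \<alpha> c)) = Im (\<i> * complex_of_real (2 * pi * real l' / real (L c) + \<alpha> c) + (of_int (2 * k) * pi) * \<i>)"
    by simp
  then have h: "2 * pi * real l / real (L c) = 2 * pi * real l' / real (L c) + 2 * real_of_int k * pi"
    by simp
  have Lp: "real (L c) > 0" using assms(2) by simp
  from h have "pi * (2 * real l) = pi * (2 * (real l' + real_of_int k * real (L c)))"
    using Lp by (simp add: field_simps)
  then have e: "real l = real l' + real_of_int k * real (L c)"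
    by simp
  have "k = 0"
  proof (rule ccontr)
    assume "k \<noteq> 0"
    then consider "k \<ge> 1" | "k \<le> -1" by linarith
    then show False
    proof cases
      case 1
      then have "real_of_int k * real (L c) \<ge> real (L c)" using Lp by simp
      then show False using e assms(2) by linarith
    next
      case 2
      then have "real_of_int k * real (L c) \<le> - real (L c)" using Lp
        by (metis mult_le_cancel_right mult_minus_left mult_1 of_int_le_iff of_int_minus of_int_1 less_imp_le not_le)
      then show False using e assms(3) by linarith
    qed
  qed
  then show ?thesis using e by simp
qed

lemma prod_group_card:
  fixes h :: "'b \<Rightarrow> real" and k :: "'a \<Rightarrow> 'b"
  assumes "finite S" "finite T" "k ` S \<subseteq> T"
  shows "(\<Prod>m\<in>S. h (k m)) = (\<Prod>c\<in>T. h c ^ card {m\<in>S. k m = c})"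
proof -
  have "(\<Prod>m\<in>S. h (k m)) = (\<Prod>c\<in>k ` S. \<Prod>m\<in>{x\<in>S. k x = c}. h (k m))"
    using assms(1) by (rule prod.image_gen)
  also have "\<dots> = (\<Prod>c\<in>k ` S. h c ^ card {m\<in>S. k m = c})"
    by (intro prod.cong refl) simp
  also have "\<dots> = (\<Prod>c\<in>T. h c ^ card {m\<in>S. k m = c})"
  proof (intro prod.mono_neutral_left)
    show "\<forall>i\<in>T - k ` S. h i ^ card {m \<in> S. k m = i} = 1"
    proof
      fix i assume "i \<in> T - k ` S"
      then have "{m \<in> S. k m = i} = {}" by auto
      then show "h i ^ card {m \<in> S. k m = i} = 1" by (metis card.empty power_0)
    qed
  qed (use assms in auto)
  finally show ?thesis .
qed


theorem corollary1:
  fixes u :: "nat \<Rightarrow> complex^'n" and D :: "nat \<Rightarrow> (complex^'n) set"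
    and M C :: nat and A \<alpha> p r :: "nat \<Rightarrow> real" and L :: "nat \<Rightarrow> nat"
    and \<sigma> \<epsilon> B \<delta> k1 k2 :: real
  assumes "\<sigma> > 0" and "k1 > 0" and "k2 > 0" and "M \<ge> 1"
    and "is_code M (constellation C A L \<alpha>) u D"
    and "avg_error \<sigma> M u D \<le> \<epsilon>"
    and "theta k1 k2 B M u \<le> \<delta>"
    and "constant_composition M u"
    and "in_family C A L \<alpha> p r M u D"
  shows "\<epsilon> \<ge> 1 - (\<Prod>c=1..C. (1 - exp (- (r c)\<^sup>2 / \<sigma>\<^sup>2)) powr (real CARD('n) * p c))"
proof -
  note sig = assms(1)
  note code = assms(5)[unfolded is_code_def constellation_def]
  note fam = assms(9)[unfolded in_family_def]
  have AC: "A C > 0" using fam by (elim conjE) assumption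
  have Lpos: "\<forall>c\<in>{1..C}. L c \<ge> 1" using fam by (elim conjE) assumption
  have psum: "(\<Sum>c=1..C. p c) = 1" using fam by (elim conjE) assumption
  have rpos: "\<forall>c\<in>{1..C}. r c > 0" using fam by (elim conjE) assumption
  have ctype: "\<forall>c\<in>{1..C}. \<forall>l<L c. code_type M u (cpoint A L \<alpha> c l) = p c / real (L c)"
    using fam by (elim conjE) assumption
  have Dreg: "\<forall>i\<in>{1..M}. D i = disc_region C A L \<alpha> r (u i)" using fam by (elim conjE) assumption
  define s where "s = \<sigma>\<^sup>2"
  have s0: "s > 0" using sig by (simp add: s_def)
  define q where "q c = 1 - exp (- (r c)\<^sup>2 / s)" for c
  define P where "P = (\<Prod>c=1..C. q c powr (real CARD('n) * p c))"
  have Adec: "\<forall>c\<in>{1..<C}. A c > A (Suc c)" using fam by (elim conjE) assumption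
  have Apos: "A c > 0" if "c \<in> {1..C}" for c
  proof (cases "c = C")
    case True then show ?thesis using AC by simp
  next
    case False
    have c1: "1 \<le> c" "c < C" using that False by auto
    from less_imp_Suc_add[OF c1(2)] obtain k where k0: "C = Suc (c + k)" ..
    then have k: "C = c + Suc k" by simp
    have "A (c + Suc k) < A c" using A_strict[OF Adec c1(1)] k by simp
    then have "A C < A c" unfolding k .
    then show ?thesis using AC by linarith
  qed
  have Ainj: "c = c'" if "c \<in> {1..C}" "c' \<in> {1..C}" "A c = A c'" for c c'
  proof (rule ccontr)
    assume "c \<noteq> c'"
    then consider "c < c'" | "c' < c" by linarith
    then show False
    proof cases
      case 1
      from less_imp_Suc_add[OF 1] obtain k where k0: "c' = Suc (c + k)" ..
      then have k: "c' = c + Suc k" by simp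
      have "1 \<le> c" "c + Suc k \<le> C" using that k by auto
      then have "A (c + Suc k) < A c" using A_strict[OF Adec] by blast
      then show False using that(3) k by simp
    next
      case 2
      from less_imp_Suc_add[OF 2] obtain k where k0: "c = Suc (c' + k)" ..
      then have k: "c = c' + Suc k" by simp
      have "1 \<le> c'" "c' + Suc k \<le> C" using that k by auto
      then have "A (c' + Suc k) < A c'" using A_strict[OF Adec] by blast
      then show False using that(3) k by simp
    qed
  qed
  have layer_unique: "c = c'" if "c \<in> {1..C}" "c' \<in> {1..C}" "cpoint A L \<alpha> c l = cpoint A L \<alpha> c' l'" for c c' l l'
  proof -
    have "A c = cmod (cpoint A L \<alpha> c l)" using Apos[OF that(1)] by (simp add: cmod_cpoint)
    also have "\<dots> = cmod (cpoint A L \<alpha> c' l')" using that(3) by simp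
    also have "\<dots> = A c'" using Apos[OF that(2)] by (simp add: cmod_cpoint)
    finally have "A c = A c'" .
    then show ?thesis using Ainj that by blast
  qed
  define lay where "lay x = (SOME c. c \<in> {1..C} \<and> (\<exists>l<L c. x = cpoint A L \<alpha> c l))" for x
  have lay: "lay (cpoint A L \<alpha> c l) = c" if "c \<in> {1..C}" "l < L c" for c l
  proof -
    have ex: "\<exists>c'. c' \<in> {1..C} \<and> (\<exists>l'<L c'. cpoint A L \<alpha> c l = cpoint A L \<alpha> c' l')"
      using that by blast
    have "lay (cpoint A L \<alpha> c l) \<in> {1..C} \<and> (\<exists>l'<L (lay (cpoint A L \<alpha> c l)). cpoint A L \<alpha> c l = cpoint A L \<alpha> (lay (cpoint A L \<alpha> c l)) l')"
      unfolding lay_def by (rule someI_ex[OF ex])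
    then obtain l' where o1: "lay (cpoint A L \<alpha> c l) \<in> {1..C}" and o2: "cpoint A L \<alpha> c l = cpoint A L \<alpha> (lay (cpoint A L \<alpha> c l)) l'"
      by blast
    have "c = lay (cpoint A L \<alpha> c l)" by (rule layer_unique[OF that(1) o1 o2])
    then show ?thesis by simp
  qed
  have per: "(LINT y:D i|lborel. awgn_density \<sigma> (u i) y) = P" if i: "i \<in> {1..M}" for i
  proof -
    define v where "v = u i"
    have vin: "\<exists>c\<in>{1..C}. \<exists>l<L c. v$m = cpoint A L \<alpha> c l" for m
      using code i unfolding v_def by blast
    define \<rho> where "\<rho> m = r (lay (v$m))" for m
    have layv: "lay (v$m) \<in> {1..C}" for m
    proof -
      obtain c l where "c \<in> {1..C}" "l < L c" "v$m = cpoint A L \<alpha> c l" using vin[of m] by blast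
      then show ?thesis using lay by simp
    qed
    have \<rho>pos: "\<rho> m > 0" for m using layv[of m] rpos unfolding \<rho>_def by blast
    have Deq: "D i = {y. \<forall>m. y$m \<in> cball (v$m) (\<rho> m)}"
    proof -
      have "D i = disc_region C A L \<alpha> r v" using Dreg i unfolding v_def by blast
      also have "\<dots> = {y. \<forall>m. y$m \<in> cball (v$m) (\<rho> m)}"
      proof (intro set_eqI iffI)
        fix y assume "y \<in> disc_region C A L \<alpha> r v"
        then have H: "\<forall>m. \<exists>c\<in>{1..C}. \<exists>l<L c. v$m = cpoint A L \<alpha> c l \<and> cmod (y$m - v$m) \<le> r c"
          unfolding disc_region_def by blast
        have "y$m \<in> cball (v$m) (\<rho> m)" for m
        proof -
          obtain c l where "c\<in>{1..C}" "l<L c" "v$m = cpoint A L \<alpha> c l" "cmod (y$m - v$m) \<le> r c"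
            using H by blast
          then show ?thesis unfolding \<rho>_def using lay by (simp add: dist_norm norm_minus_commute)
        qed
        then show "y \<in> {y. \<forall>m. y$m \<in> cball (v$m) (\<rho> m)}" by blast
      next
        fix y assume "y \<in> {y. \<forall>m. y$m \<in> cball (v$m) (\<rho> m)}"
        then have H: "y$m \<in> cball (v$m) (\<rho> m)" for m by blast
        have "\<exists>c\<in>{1..C}. \<exists>l<L c. v$m = cpoint A L \<alpha> c l \<and> cmod (y$m - v$m) \<le> r c" for m
        proof -
          obtain c l where cl: "c \<in> {1..C}" "l < L c" "v$m = cpoint A L \<alpha> c l" using vin[of m] by blast
          then have "\<rho> m = r c" unfolding \<rho>_def using lay by simp
          then have "cmod (y$m - v$m) \<le> r c" using H[of m] by (simp add: dist_norm norm_minus_commute)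
          then show ?thesis using cl by blast
        qed
        then show "y \<in> disc_region C A L \<alpha> r v" unfolding disc_region_def by blast
      qed
      finally show ?thesis .
    qed
    define g where "g m z = indicator (cball (v$m) (\<rho> m)) z * (1 / (pi * s) * exp (-(cmod(z - v$m))\<^sup>2/s))" for m z
    have g0: "g m z \<ge> 0" for m z unfolding g_def using s0 by simp
    have gm[measurable]: "g m \<in> borel_measurable borel" for m
      unfolding g_def
      by (intro borel_measurable_times borel_measurable_indicator borel_closed closed_cball
          borel_measurable_continuous_onI continuous_intros) (use s0 in auto)
    have ind: "(indicator (D i) y :: real) = (\<Prod>m\<in>UNIV. indicator (cball (v$m) (\<rho> m)) (y$m))" for y
    proof (cases "y \<in> D i")
      case True then show ?thesis by (simp add: Deq)
    next
      case False
      then obtain m where m: "y$m \<notin> cball (v$m) (\<rho> m)" by (auto simp: Deq)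
      have "(\<Prod>m\<in>UNIV. indicator (cball (v$m) (\<rho> m)) (y$m) :: real) = 0"
      proof (rule prod_zero)
        show "\<exists>a\<in>UNIV. indicator (cball (v$a) (\<rho> a)) (y$a) = (0::real)"
          using m by (intro bexI[of _ m]) (simp_all add: indicator_def)
      qed simp
      then show ?thesis using False by simp
    qed
    have pw: "indicator (D i) y *\<^sub>R awgn_density \<sigma> v y = (\<Prod>m\<in>UNIV. g m (y$m))" for y
      unfolding ind awgn_density_def g_def s_def real_scaleR_def prod.distrib[symmetric] by (rule refl)
    have pm: "(\<lambda>y. \<Prod>m\<in>UNIV. g m (y$m)) \<in> borel_measurable (lborel :: (complex^'n) measure)"
      unfolding measurable_lborel2 by (intro borel_measurable_prod measurable_compose[OF vec_nth_borel gm])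
    have "(LINT y:D i|lborel. awgn_density \<sigma> (u i) y) = integral\<^sup>L lborel (\<lambda>y. \<Prod>m\<in>UNIV. g m (y$m))"
      unfolding set_lebesgue_integral_def v_def[symmetric] pw ..
    also have "\<dots> = enn2real (\<integral>\<^sup>+y. ennreal (\<Prod>m\<in>UNIV. g m (y$m)) \<partial>lborel)"
      using pm g0 by (intro integral_eq_nn_integral) (auto intro: prod_nonneg)
    also have "(\<integral>\<^sup>+y. ennreal (\<Prod>m\<in>UNIV. g m (y$m)) \<partial>lborel) = (\<integral>\<^sup>+y. (\<Prod>m\<in>UNIV. ennreal (g m (y$m))) \<partial>lborel)"
      using g0 by (intro nn_integral_cong) (simp add: prod_ennreal)
    also have "\<dots> = (\<Prod>m\<in>UNIV. \<integral>\<^sup>+z. ennreal (g m z) \<partial>lborel)"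
      by (rule nn_integral_lborel_vec_prod) simp
    also have "\<dots> = (\<Prod>m\<in>UNIV. ennreal (q (lay (v$m))))"
      unfolding g_def q_def using \<rho>pos s0 by (intro prod.cong refl, subst disc_gauss) (auto simp: \<rho>_def less_imp_le)
    also have "\<dots> = ennreal (\<Prod>m\<in>UNIV. q (lay (v$m)))"
      by (intro prod_ennreal) (auto simp: q_def s0 less_imp_le)
    finally have "(LINT y:D i|lborel. awgn_density \<sigma> (u i) y) = enn2real (ennreal (\<Prod>m\<in>UNIV. q (lay (v$m))))" .
    also have "\<dots> = (\<Prod>m\<in>UNIV. q (lay (v$m)))"
      by (intro enn2real_ennreal prod_nonneg) (auto simp: q_def s0 less_imp_le)
    finally have "(LINT y:D i|lborel. awgn_density \<sigma> (u i) y) = (\<Prod>m\<in>UNIV. q (lay (v$m)))" .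
    also have "\<dots> = (\<Prod>c\<in>{1..C}. q c ^ card {m\<in>UNIV. lay (v$m) = c})"
      by (rule prod_group_card) (use layv in auto)
    also have "\<dots> = P"
      unfolding P_def
    proof (intro prod.cong refl)
      fix c assume c: "c \<in> {1..C}"
      have "r c > 0" using rpos c by blast
      then have "(r c)\<^sup>2 / s > 0" using s0 by simp
      then have qpos: "q c > 0" unfolding q_def by simp
      have cnt: "real (card {m. v$m = cpoint A L \<alpha> c l}) = real CARD('n) * (p c / real (L c))" if "l < L c" for l
      proof -
        have "type_of_word v (cpoint A L \<alpha> c l) = code_type M u (cpoint A L \<alpha> c l)"
          using assms(8) i unfolding constant_composition_def v_def by blast
        also have "\<dots> = p c / real (L c)" using ctype c that by blast
        finally have "type_of_word v (cpoint A L \<alpha> c l) = p c / real (L c)" .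
        then show ?thesis unfolding type_of_word_def by (simp add: field_simps)
      qed
      have seteq: "{m\<in>UNIV. lay (v$m) = c} = (\<Union>l\<in>{..<L c}. {m. v$m = cpoint A L \<alpha> c l})"
      proof (intro set_eqI iffI)
        fix m assume "m \<in> {m\<in>UNIV. lay (v$m) = c}"
        then show "m \<in> (\<Union>l\<in>{..<L c}. {m. v$m = cpoint A L \<alpha> c l})"
          using vin[of m] lay by auto
      next
        fix m assume "m \<in> (\<Union>l\<in>{..<L c}. {m. v$m = cpoint A L \<alpha> c l})"
        then show "m \<in> {m\<in>UNIV. lay (v$m) = c}" using lay c by auto
      qed
      have "card {m\<in>UNIV. lay (v$m) = c} = (\<Sum>l\<in>{..<L c}. card {m. v$m = cpoint A L \<alpha> c l})"
        unfolding seteq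
      proof (rule card_UN_disjoint)
        show "\<forall>l\<in>{..<L c}. \<forall>l'\<in>{..<L c}. l \<noteq> l' \<longrightarrow> {m. v$m = cpoint A L \<alpha> c l} \<inter> {m. v$m = cpoint A L \<alpha> c l'} = {}"
        proof (intro ballI impI)
          fix l l' assume "l \<in> {..<L c}" "l' \<in> {..<L c}" "l \<noteq> l'"
          then have "cpoint A L \<alpha> c l \<noteq> cpoint A L \<alpha> c l'"
            using cpoint_inj[of A c l L l' \<alpha>] Apos[OF c] by auto
          then show "{m. v$m = cpoint A L \<alpha> c l} \<inter> {m. v$m = cpoint A L \<alpha> c l'} = {}" by auto
        qed
      qed auto
      then have "real (card {m\<in>UNIV. lay (v$m) = c}) = (\<Sum>l\<in>{..<L c}. real CARD('n) * (p c / real (L c)))"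
        using cnt by simp
      also have "\<dots> = real CARD('n) * p c"
      proof -
        have "L c \<ge> 1" using Lpos c by blast
        then show ?thesis by simp
      qed
      finally have "real (card {m\<in>UNIV. lay (v$m) = c}) = real CARD('n) * p c" .
      then show "q c ^ card {m\<in>UNIV. lay (v$m) = c} = q c powr (real CARD('n) * p c)"
        using powr_realpow[OF qpos, of "card {m\<in>UNIV. lay (v$m) = c}"] by simp
    qed
    finally show ?thesis .
  qed
  have "avg_error \<sigma> M u D = 1 / real M * (\<Sum>i=1..M. 1 - P)"
    unfolding avg_error_def using per by simp
  also have "\<dots> = 1 - P" using assms(4) by simp
  finally have "avg_error \<sigma> M u D = 1 - P" .
  then show ?thesis using assms(6) unfolding P_def q_def s_def by simp
qed

end
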